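(* Consider an unlabeled tabletop rearrangement instance in which all $n$ objects have congruent footprints, each footprint being a regular $d$-gon ($d\ge 3$) of the same size (placed at arbitrary positions and orientations). Then every vertex of the unlabeled dependency graph of the instance has degree at most $19$.
   Context: A tabletop rearrangement instance consists of $n$ objects (generalized cylinders of equal height, so only their planar footprints matter) in a bounded planar workspace, a start arrangement and a goal arrangement. An arrangement assigns to each object a pose in $SE(2)$; it is feasible if no two placed footprints overlap, where two placed footprints overlap if their interiors intersect. Both the start and goal arrangements are feasible. In the unlabeled setting objects are interchangeable. The unlabeled dependency graph is the bipartite graph with one start vertex for each start pose and one goal vertex for each goal pose, with an edge between a start vertex and a goal vertex iff a footprint placed at that start pose overlaps a footprint placed at that goal pose. *)

theory Defs
  imports "HOL-Analysis.Analysis"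
begin

text \<open>The plane is modelled as the complex numbers. A pose in SE(2) is a pair
  (rotation angle, translation).\<close>

type_synonym pose = "real \<times> complex"

definition regular_polygon :: "nat \<Rightarrow> real \<Rightarrow> complex set" where
  "regular_polygon d r =
     convex hull {complex_of_real r * cis (2 * pi * real k / real d) | k. k < d}"

definition place :: "complex set \<Rightarrow> pose \<Rightarrow> complex set" where
  "place F p = (\<lambda>z. snd p + cis (fst p) * z) ` F"

definition overlap :: "complex set \<Rightarrow> complex set \<Rightarrow> bool" where
  "overlap A B \<longleftrightarrow> interior A \<inter> interior B \<noteq> {}"

definition feasible :: "complex set \<Rightarrow> nat \<Rightarrow> (nat \<Rightarrow> pose) \<Rightarrow> bool" where
  "feasible F n a \<longleftrightarrow>
     (\<forall>i<n. \<forall>j<n. i \<noteq> j \<longrightarrow> \<not> overlap (place F (a i)) (place F (a j)))"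

text \<open>Unlabeled dependency graph (bipartite): edge (i, j) between start vertex i
  and goal vertex j iff the footprint at start pose i overlaps the one at goal pose j.\<close>
definition dep_edges :: "complex set \<Rightarrow> nat \<Rightarrow> (nat \<Rightarrow> pose) \<Rightarrow> (nat \<Rightarrow> pose) \<Rightarrow> (nat \<times> nat) set" where
  "dep_edges F n s g =
     {(i, j). i < n \<and> j < n \<and> overlap (place F (s i)) (place F (g j))}"

definition start_degree :: "complex set \<Rightarrow> nat \<Rightarrow> (nat \<Rightarrow> pose) \<Rightarrow> (nat \<Rightarrow> pose) \<Rightarrow> nat \<Rightarrow> nat" where
  "start_degree F n s g i = card {j. (i, j) \<in> dep_edges F n s g}"

definition goal_degree :: "complex set \<Rightarrow> nat \<Rightarrow> (nat \<Rightarrow> pose) \<Rightarrow> (nat \<Rightarrow> pose) \<Rightarrow> nat \<Rightarrow> nat" where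
  "goal_degree F n s g j = card {i. (i, j) \<in> dep_edges F n s g}"

end

theory Submission
  imports Defs
begin


definition fv :: "real^2 \<Rightarrow> complex" where "fv v = Complex (v$1) (v$2)"
definition tv :: "complex \<Rightarrow> real^2" where "tv z = (\<chi> i. if i = 1 then Re z else Im z)"

lemma tv_1 [simp]: "tv z $ 1 = Re z" and tv_2 [simp]: "tv z $ 2 = Im z"
  by (auto simp: tv_def)

lemma fv_tv [simp]: "fv (tv z) = z" by (simp add: fv_def complex_eq_iff)
lemma tv_fv [simp]: "tv (fv v) = v"
  unfolding vec_eq_iff forall_2 by (simp add: tv_def fv_def)

lemma UNIV_2: "(UNIV :: 2 set) = {1, 2}" using exhaust_2 by blast

lemma mem_box_complex: "(z::complex) \<in> box l u \<longleftrightarrow> Re l < Re z \<and> Re z < Re u \<and> Im l < Im z \<and> Im z < Im u"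
  by (auto simp: mem_box Basis_complex_def)
lemma mem_box_2: "(x::real^2) \<in> box l u \<longleftrightarrow> l$1 < x$1 \<and> x$1 < u$1 \<and> l$2 < x$2 \<and> x$2 < u$2"
  unfolding mem_box_cart forall_2 by simp

lemma fv_box: "fv -` box l u = box (tv l) (tv u)"
  by (auto simp: mem_box_complex mem_box_2 fv_def)

lemma prod_Basis_2: "(\<Prod>b\<in>(Basis::(real^2) set). f b) = f (axis 1 1) * f (axis 2 1)"
proof -
  have b: "(Basis::(real^2) set) = {axis 1 1, axis 2 1}"
    unfolding Basis_vec_def UNIV_2 by auto
  have ne: "axis 1 (1::real) \<noteq> (axis 2 1 :: real^2)"
    by (simp add: axis_eq_axis)
  show ?thesis unfolding b using ne by simp
qed

lemma cont_fv: "continuous_on UNIV fv"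
  unfolding fv_def by (intro continuous_intros)

lemma lborel_complex: "(lborel :: complex measure) = distr lborel borel fv"
proof (rule lborel_eqI)
  fix l u :: complex assume lu: "\<And>b. b \<in> Basis \<Longrightarrow> l \<bullet> b \<le> u \<bullet> b"
  have m: "fv \<in> borel_measurable lborel"
    using cont_fv by (simp add: borel_measurable_continuous_onI)
  have "emeasure (distr lborel borel fv) (box l u) = emeasure lborel (fv -` box l u)"
    using m by (subst emeasure_distr) auto
  also have "\<dots> = emeasure lborel (box (tv l) (tv u))" by (simp add: fv_box)
  also have "\<dots> = (\<Prod>b\<in>Basis. (tv u - tv l) \<bullet> b)"
    using lu[of 1] lu[of \<i>] by (intro emeasure_lborel_box) (auto simp: Basis_vec_def cart_eq_inner_axis[symmetric] Basis_complex_def UNIV_2)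
  also have "\<dots> = (\<Prod>b\<in>Basis. (u - l) \<bullet> b)"
    by (simp add: prod_Basis_2 cart_eq_inner_axis[symmetric] Basis_complex_def)
  finally show "emeasure (distr lborel borel fv) (box l u) = (\<Prod>b\<in>Basis. (u - l) \<bullet> b)" .
qed simp

lemma linear_tv: "linear tv"
  by (rule linearI) (auto simp: vec_eq_iff tv_def)

lemma fv_vimage: "fv -` S = tv ` S"
  by (auto simp: image_iff) (metis tv_fv)

lemma measure_complex_transfer:
  assumes "S \<in> sets borel"
  shows "measure lborel (S::complex set) = measure lborel (tv ` S)"
proof -
  have m: "fv \<in> borel_measurable lborel"
    using cont_fv by (simp add: borel_measurable_continuous_onI)
  have "measure lborel S = measure (distr lborel borel fv) S"
    by (rule arg_cong[where f="\<lambda>M. measure M S", OF lborel_complex])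
  also have "\<dots> = measure lborel (fv -` S)"
    using m assms by (subst measure_distr) auto
  finally show ?thesis by (simp add: fv_vimage)
qed

lemma content_triangle_complex:
  "measure lborel (convex hull {A, B, C::complex}) =
     \<bar>(Re C - Re A) * (Im B - Im A) - (Re B - Re A) * (Im C - Im A)\<bar> / 2"
proof -
  have "closed (convex hull {A, B, C})"
    by (simp add: compact_imp_closed finite_imp_compact_convex_hull)
  then have "measure lborel (convex hull {A, B, C}) = measure lborel (tv ` (convex hull {A, B, C}))"
    by (intro measure_complex_transfer) auto
  also have "tv ` (convex hull {A, B, C}) = convex hull {tv A, tv B, tv C}"
    by (simp add: convex_hull_linear_image linear_tv)
  also have "measure lborel \<dots> = \<bar>(Re C - Re A) * (Im B - Im A) - (Re B - Re A) * (Im C - Im A)\<bar> / 2"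
    using content_triangle[of "tv A" "tv B" "tv C"] by simp
  finally show ?thesis .
qed




lemma near_vertex:
  assumes "d > 0"
  shows "\<exists>k<d. cos (2*pi*real k/real d - \<phi>) \<ge> cos (pi/real d)"
proof -
  define x where "x = \<phi> * real d / (2*pi)"
  define k0 where "k0 = \<lfloor>x + 1/2\<rfloor>"
  define m where "m = k0 div int d"
  define k where "k = nat (k0 mod int d)"
  have "k0 mod int d < int d" using assms by simp
  then have kd: "k < d" unfolding k_def using assms by (simp add: nat_less_iff)
  have k0eq: "k0 = int d * m + int k"
    using assms by (simp add: k_def m_def)
  have rk: "real k = real_of_int k0 - real d * real_of_int m"
    using arg_cong[OF k0eq, of real_of_int] by simp
  have dpos: "real d > 0" using assms by simp
  have e1: "2*pi*real k/real d - \<phi> = (2*pi*real_of_int k0/real d - \<phi>) - 2*pi*real_of_int m"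
    using dpos by (simp add: rk field_simps)
  have e2: "cos (2*pi*real k/real d - \<phi>) = cos (2*pi*real_of_int k0/real d - \<phi>)"
    unfolding e1 cos_diff by simp
  have b1: "x - 1/2 < real_of_int k0" "real_of_int k0 \<le> x + 1/2"
    unfolding k0_def by linarith+
  have e3: "2*pi*real_of_int k0/real d - \<phi> = (2*pi/real d) * (real_of_int k0 - x)"
    using dpos by (simp add: x_def field_simps)
  have "\<bar>2*pi*real_of_int k0/real d - \<phi>\<bar> = (2*pi/real d) * \<bar>real_of_int k0 - x\<bar>"
    unfolding e3 using dpos by (simp add: abs_mult)
  also have "\<dots> \<le> (2*pi/real d) * (1/2)"
  proof (intro mult_left_mono)
    show "\<bar>real_of_int k0 - x\<bar> \<le> 1/2" unfolding abs_le_iff using b1 by linarith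
  qed (use dpos in auto)
  finally have b2: "\<bar>2*pi*real_of_int k0/real d - \<phi>\<bar> \<le> pi/real d" by simp
  have "pi / real d \<le> pi" using assms by (simp add: divide_le_eq)
  then have "cos (pi/real d) \<le> cos \<bar>2*pi*real_of_int k0/real d - \<phi>\<bar>"
    using b2 by (intro cos_monotone_0_pi_le) auto
  then show ?thesis using kd e2 by auto
qed

definition verts :: "nat \<Rightarrow> real \<Rightarrow> complex set" where
  "verts d r = {complex_of_real r * cis (2 * pi * real k / real d) | k. k < d}"

lemma poly_eq: "regular_polygon d r = convex hull (verts d r)"
  by (simp add: regular_polygon_def verts_def)

lemma verts_img: "verts d r = (\<lambda>k. complex_of_real r * cis (2 * pi * real k / real d)) ` {..<d}"
  by (auto simp: verts_def)

lemma finite_verts: "finite (verts d r)"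
  by (simp add: verts_img)

lemma aff_hull: "(\<lambda>z. t + (c::complex) * z) ` (convex hull X) = convex hull ((\<lambda>z. t + c * z) ` X)"
proof -
  have lin: "linear ((*) c)" by (rule linearI) (simp_all add: algebra_simps scaleR_conv_of_real)
  have e: "(\<lambda>z. t + c * z) ` S = (+) t ` ((*) c ` S)" for S :: "complex set"
    by (simp add: image_image)
  show ?thesis unfolding e
    by (simp add: convex_hull_translation convex_hull_linear_image[OF lin])
qed

lemma poly_cball: "r \<ge> 0 \<Longrightarrow> regular_polygon d r \<subseteq> cball 0 r"
  unfolding poly_eq
  by (rule hull_minimal) (auto simp: verts_def norm_mult)

lemma place_cball:
  assumes "r \<ge> 0" shows "place (regular_polygon d r) p \<subseteq> cball (snd p) r"
  using poly_cball[OF assms, of d] by (auto simp: place_def dist_norm norm_mult)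

lemma place_ball:
  assumes "ball 0 \<rho> \<subseteq> F" shows "ball (snd p) \<rho> \<subseteq> place F p"
proof
  fix w assume w: "w \<in> ball (snd p) \<rho>"
  define z where "z = cnj (cis (fst p)) * (w - snd p)"
  have "z \<in> ball 0 \<rho>" using w by (simp add: z_def norm_mult dist_norm norm_minus_commute)
  then have "z \<in> F" using assms by auto
  moreover have "w = snd p + cis (fst p) * z"
    by (simp add: z_def cis_cnj mult.assoc[symmetric] cis_mult)
  ultimately show "w \<in> place F p" unfolding place_def by blast
qed

lemma poly_ball:
  assumes d: "d > 0" and r: "r > 0"
  shows "ball 0 (r * cos (pi / real d)) \<subseteq> regular_polygon d r"
proof
  fix z :: complex assume z: "z \<in> ball 0 (r * cos (pi / real d))"
  show "z \<in> regular_polygon d r"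
  proof (rule ccontr)
    assume nz: "z \<notin> regular_polygon d r"
    have cl: "closed (regular_polygon d r)"
      unfolding poly_eq by (simp add: compact_imp_closed finite_imp_compact_convex_hull finite_verts)
    obtain a b where ab: "inner a z < b" "\<forall>x\<in>regular_polygon d r. inner a x > b"
      using separating_hyperplane_closed_point[OF _ cl nz] unfolding poly_eq by auto
    have v0: "complex_of_real r * cis (2 * pi * real 0 / real d) \<in> regular_polygon d r"
      unfolding poly_eq verts_def using d by (intro hull_inc) blast
    have an: "a \<noteq> 0"
    proof
      assume "a = 0" then show False using ab v0 by auto
    qed
    define \<phi> where "\<phi> = Arg (- a)"
    have ca: "cis \<phi> = - a / complex_of_real (cmod a)"
      unfolding \<phi>_def using an by (simp add: cis_Arg sgn_div_norm divide_inverse scaleR_conv_of_real mult.commute)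
    have aeq: "a = - complex_of_real (cmod a) * cis \<phi>"
      using an ca by (simp add: field_simps)
    obtain k where k: "k < d" "cos (2*pi*real k/real d - \<phi>) \<ge> cos (pi/real d)"
      using near_vertex[OF d] by blast
    define \<alpha> where "\<alpha> = 2*pi*real k/real d"
    define v where "v = complex_of_real r * cis \<alpha>"
    have vin: "v \<in> regular_polygon d r"
      unfolding poly_eq verts_def v_def \<alpha>_def using k by (intro hull_inc) blast
    have "inner a v = - cmod a * r * cos (\<alpha> - \<phi>)"
      by (subst aeq) (simp add: v_def inner_complex_def cos_diff algebra_simps)
    also have "\<dots> \<le> - cmod a * r * cos (pi/real d)"
      using k r an unfolding \<alpha>_def by (simp add: mult_left_mono)
    also have "\<dots> < - cmod a * cmod z"
      using z an by (simp add: dist_norm)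
    also have "\<dots> \<le> inner a z"
      using Cauchy_Schwarz_ineq2[of a z] by (simp add: abs_le_iff)
    finally show False using ab vin by force
  qed
qed




definition w1 :: complex where "w1 = Complex (-1/2) (sqrt 3/2)"
definition w2 :: complex where "w2 = Complex (-1/2) (- sqrt 3/2)"

lemma cis_w1: "cis (2 * pi * real (1::nat) / real (3::nat)) = w1"
  by (simp add: w1_def complex_eq_iff cos_120 sin_120)

lemma cis_w2: "cis (2 * pi * real (2::nat) / real (3::nat)) = w2"
proof -
  have "2 * pi * real (2::nat) / real (3::nat) = pi/3 + pi" by simp
  then show ?thesis by (simp only: w2_def complex_eq_iff cos_add sin_add cos_60 sin_60 cis.sel) simp
qed

lemma verts3: "verts 3 r = {complex_of_real r, complex_of_real r * w1, complex_of_real r * w2}"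
proof -
  have "{..<3::nat} = {0,1,2}" by auto
  then show ?thesis unfolding verts_img using cis_w1 cis_w2 by simp
qed

lemma place3: "place (regular_polygon 3 r) p =
  convex hull {snd p + cis (fst p) * r, snd p + cis (fst p) * (r * w1), snd p + cis (fst p) * (r * w2)}"
  unfolding place_def poly_eq aff_hull verts3 by simp

lemma sqrt3sq: "sqrt 3 * sqrt 3 = (3::real)" by simp

lemma area3:
  assumes "r > 0"
  shows "measure lborel (place (regular_polygon 3 r) p) = 3 * sqrt 3 / 4 * r^2"
proof -
  obtain a b where c: "cis (fst p) = Complex a b" by (meson complex.exhaust_sel)
  have ab: "a^2 + b^2 = 1"
    using arg_cong[OF c, of "\<lambda>z. (Re z)^2 + (Im z)^2"] by simp
  define t where "t = snd p"
  have "(Re (t + Complex a b * (r * w2)) - Re (t + Complex a b * r)) * (Im (t + Complex a b * (r * w1)) - Im (t + Complex a b * r))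
       - (Re (t + Complex a b * (r * w1)) - Re (t + Complex a b * r)) * (Im (t + Complex a b * (r * w2)) - Im (t + Complex a b * r))
       = - (3/2) * sqrt 3 * r^2 * (a^2 + b^2)"
    by (simp add: w1_def w2_def algebra_simps power2_eq_square)
  then have eq: "(Re (t + Complex a b * (r * w2)) - Re (t + Complex a b * r)) * (Im (t + Complex a b * (r * w1)) - Im (t + Complex a b * r))
       - (Re (t + Complex a b * (r * w1)) - Re (t + Complex a b * r)) * (Im (t + Complex a b * (r * w2)) - Im (t + Complex a b * r))
       = - (3/2) * sqrt 3 * r^2" unfolding ab by simp
  show ?thesis
    unfolding place3 c t_def[symmetric] content_triangle_complex eq using assms by simp
qed



lemma diam3:
  assumes "r > 0" and "x \<in> place (regular_polygon 3 r) p" "y \<in> place (regular_polygon 3 r) p"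
  shows "norm (x - y) \<le> sqrt 3 * r"
proof -
  define c where "c = cis (fst p)"
  define S where "S = {snd p + c * r, snd p + c * (r * w1), snd p + c * (r * w2)}"
  have nc: "norm c = 1" by (simp add: c_def)
  have n1: "cmod (1 - w1) = sqrt 3" "cmod (1 - w2) = sqrt 3" "cmod (w1 - w2) = sqrt 3"
    by (simp_all add: w1_def w2_def cmod_def power2_eq_square)
  have n2: "cmod (w1 - 1) = sqrt 3" "cmod (w2 - 1) = sqrt 3" "cmod (w2 - w1) = sqrt 3"
    using n1 by (simp_all add: norm_minus_commute)
  have e: "(t + c * (r * a)) - (t + c * (r * b)) = c * r * (a - b)" for t a b :: complex
    by (simp add: algebra_simps)
  have e1: "(t + c * r) - (t + c * (r * b)) = c * r * (1 - b)" for t b :: complex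
    by (simp add: algebra_simps)
  have e2: "(t + c * (r * b)) - (t + c * r) = c * r * (b - 1)" for t b :: complex
    by (simp add: algebra_simps)
  have f: "c * (r * a) - c * (r * b) = c * r * (a - b)" for a b :: complex
    by (simp add: algebra_simps)
  have f1: "c * r - c * (r * b) = c * r * (1 - b)" for b :: complex
    by (simp add: algebra_simps)
  have f2: "c * (r * b) - c * r = c * r * (b - 1)" for b :: complex
    by (simp add: algebra_simps)
  have vv: "\<forall>u\<in>S. \<forall>v\<in>S. norm (u - v) \<le> sqrt 3 * r"
    unfolding S_def using assms(1)
    by (auto simp: e e1 e2 f f1 f2 norm_mult nc n1 n2)
  obtain u v where uv: "u \<in> S" "v \<in> S" "\<forall>x\<in>convex hull S. \<forall>y\<in>convex hull S. norm (x - y) \<le> norm (u - v)"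
  proof -
    have "finite S" "S \<noteq> {}" unfolding S_def by auto
    from simplex_extremal_le[OF this] show ?thesis using that by blast
  qed
  have "x \<in> convex hull S" "y \<in> convex hull S"
    using assms(2,3) unfolding place3 S_def c_def by auto
  then show ?thesis using uv vv by force
qed

lemma packing:
  fixes A :: "nat \<Rightarrow> complex set"
  assumes J: "finite J" and As: "\<And>j. j \<in> J \<Longrightarrow> A j \<in> sets lborel"
    and dis: "disjoint_family_on A J" and sub: "\<And>j. j \<in> J \<Longrightarrow> A j \<subseteq> B"
    and Bs: "B \<in> sets lborel" and Bb: "bounded B"
    and m: "\<And>j. j \<in> J \<Longrightarrow> m \<le> measure lborel (A j)"
  shows "real (card J) * m \<le> measure lborel B"
proof -
  have fin: "emeasure lborel (A j) \<noteq> \<infinity>" if "j \<in> J" for j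
    using emeasure_bounded_finite[OF bounded_subset[OF Bb sub[OF that]]] by simp
  have "real (card J) * m = (\<Sum>j\<in>J. m)" by simp
  also have "\<dots> \<le> (\<Sum>j\<in>J. measure lborel (A j))" using m by (intro sum_mono) auto
  also have "\<dots> = measure lborel (\<Union>j\<in>J. A j)"
    using J As dis fin by (intro measure_finite_Union[symmetric]) auto
  also have "\<dots> \<le> measure lborel B"
  proof (rule measure_mono_fmeasurable)
    show "(\<Union>j\<in>J. A j) \<subseteq> B" using sub by auto
    show "(\<Union>j\<in>J. A j) \<in> sets lborel" using J As by auto
    show "B \<in> fmeasurable lborel" using Bs emeasure_bounded_finite[OF Bb] by (auto simp: fmeasurable_def)
  qed
  finally show ?thesis .
qed

lemma content_cball_complex: "r \<ge> 0 \<Longrightarrow> measure lborel (cball (c::complex) r) = pi * r^2"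
  by (simp add: content_cball eval_unit_ball_vol)

lemma content_ball_complex: "r \<ge> 0 \<Longrightarrow> measure lborel (ball (c::complex) r) = pi * r^2"
  by (simp add: content_ball eval_unit_ball_vol)

lemma core:
  fixes p :: pose and g :: "nat \<Rightarrow> pose"
  assumes d: "d \<ge> 3" and r: "r > 0" and feas: "feasible (regular_polygon d r) n g"
  shows "card {j. j < n \<and> overlap (place (regular_polygon d r) p) (place (regular_polygon d r) (g j))} \<le> 19"
proof -
  define F where "F = regular_polygon d r"
  define J where "J = {j. j < n \<and> overlap (place F p) (place F (g j))}"
  define c where "c = snd p"
  have Jfin: "finite J" unfolding J_def by simp
  have near: "\<exists>x. dist c x \<le> r \<and> x \<in> place F (g j)" if "j \<in> J" for j
  proof -
    have "overlap (place F p) (place F (g j))" using that by (simp add: J_def)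
    then have "interior (place F p) \<inter> interior (place F (g j)) \<noteq> {}" by (simp add: overlap_def)
    then obtain x where "x \<in> interior (place F p)" "x \<in> interior (place F (g j))"
      by blast
    then have "x \<in> place F p" "x \<in> place F (g j)" using interior_subset by auto
    moreover have "dist c x \<le> r" using place_cball[of r d p] r \<open>x \<in> place F p\<close> unfolding F_def c_def by auto
    ultimately show ?thesis by blast
  qed
  have disj: "interior (place F (g j)) \<inter> interior (place F (g j')) = {}"
    if "j \<in> J" "j' \<in> J" "j \<noteq> j'" for j j'
    using feas that unfolding feasible_def overlap_def J_def F_def by auto
  show ?thesis
  proof (cases "d = 3")
    case True
    define A where "A j = interior (place F (g j))" for j
    have sub: "A j \<subseteq> cball c ((1 + sqrt 3) * r)" if jJ: "j \<in> J" for j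
    proof
      fix y assume y: "y \<in> A j"
      obtain x where x: "dist c x \<le> r" "x \<in> place F (g j)" using near[OF jJ] by blast
      have "y \<in> place F (g j)" using y interior_subset unfolding A_def by auto
      then have "norm (x - y) \<le> sqrt 3 * r"
        using diam3[of r x "g j" y] r x(2) unfolding F_def True by blast
      then have "dist c y \<le> r + sqrt 3 * r"
        using x(1) dist_triangle[of c y x] by (simp add: dist_norm)
      then show "y \<in> cball c ((1 + sqrt 3) * r)" by (simp add: algebra_simps)
    qed
    have meas: "measure lborel (A j) = 3 * sqrt 3 / 4 * r^2" for j
    proof -
      define S where "S = place F (g j)"
      have S: "S = convex hull {snd (g j) + cis (fst (g j)) * r, snd (g j) + cis (fst (g j)) * (r * w1),
             snd (g j) + cis (fst (g j)) * (r * w2)}"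
        unfolding S_def F_def True place3 ..
      have cS: "compact S" unfolding S by (simp add: finite_imp_compact_convex_hull)
      have "convex S" unfolding S by simp
      then have "negligible (frontier S)" by (rule negligible_convex_frontier)
      then have "measure lebesgue (interior S) = measure lebesgue S"
        using cS by (intro measure_interior) (auto simp: compact_imp_bounded)
      moreover have "measure lebesgue (interior S) = measure lborel (interior S)"
        by (intro measure_completion) auto
      moreover have "measure lebesgue S = measure lborel S"
        using cS by (intro measure_completion) (auto simp: compact_imp_closed)
      ultimately show ?thesis
        unfolding A_def S_def[symmetric] using area3[OF r, of "g j"] unfolding S_def F_def True by simp
    qed
    have "real (card J) * (3 * sqrt 3 / 4 * r^2) \<le> measure lborel (cball c ((1 + sqrt 3) * r))"
    proof (rule packing[OF Jfin, of A])
      show "disjoint_family_on A J" unfolding disjoint_family_on_def A_def using disj by auto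
    qed (use sub meas in \<open>auto simp: A_def\<close>)
    also have "\<dots> = pi * ((1 + sqrt 3) * r)^2"
      using r by (intro content_cball_complex) auto
    finally have ineq: "real (card J) * (3 * sqrt 3 / 4) * r^2 \<le> pi * (4 + 2 * sqrt 3) * r^2"
      by (simp add: power2_eq_square algebra_simps)
    have ineq2: "real (card J) * (3 * sqrt 3 / 4) \<le> pi * (4 + 2 * sqrt 3)"
      using mult_right_le_imp_le[OF ineq] r by simp
    show ?thesis
    proof (rule ccontr)
      assume "\<not> ?thesis"
      then have N: "real (card J) \<ge> 20" unfolding J_def F_def by simp
      have s1: "sqrt 3 \<ge> (1.7::real)" by (rule real_le_rsqrt) (simp add: power2_eq_square)
      have p1: "pi \<le> 63/20" using pi_approx by simp
      have a0: "20 * (3 * sqrt 3 / 4) \<le> real (card J) * (3 * sqrt 3 / 4)"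
        using N by (intro mult_right_mono) auto
      have a1: "15 * sqrt 3 \<le> real (card J) * (3 * sqrt 3 / 4)"
        using a0 by simp
      have b0: "pi * (4 + 2 * sqrt 3) \<le> 63/20 * (4 + 2 * sqrt 3)"
        using p1 by (intro mult_right_mono) auto
      have b1: "63/20 * (4 + 2 * sqrt 3) = 63/5 + 63/10 * sqrt 3"
        by (simp add: algebra_simps)
      show False using ineq2 s1 a1 b0 b1 by linarith
    qed
  next
    case False
    then have d4: "d \<ge> 4" using d by simp
    define \<rho> where "\<rho> = 7/10 * r"
    have "cos (pi / 4) \<le> cos (pi / real d)"
      using d4 by (intro cos_monotone_0_pi_le) (auto simp: field_simps)
    moreover have "(7/10::real) \<le> sqrt 2 / 2"
    proof -
      have "(1.4::real) \<le> sqrt 2" by (rule real_le_rsqrt) (simp add: power2_eq_square)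
      then show ?thesis by simp
    qed
    ultimately have cosb: "7/10 \<le> cos (pi / real d)" by (simp add: cos_45)
    have ballF: "ball 0 \<rho> \<subseteq> F"
    proof -
      have "ball 0 \<rho> \<subseteq> ball 0 (r * cos (pi / real d))"
        unfolding \<rho>_def using cosb r by (intro subset_ball) (simp add: mult.commute)
      also have "\<dots> \<subseteq> F" unfolding F_def using d r by (intro poly_ball) auto
      finally show ?thesis .
    qed
    define A where "A j = ball (snd (g j)) \<rho>" for j
    have Aint: "A j \<subseteq> interior (place F (g j))" for j
      unfolding A_def by (intro interior_maximal place_ball ballF) auto
    have sub: "A j \<subseteq> cball c (27/10 * r)" if jJ: "j \<in> J" for j
    proof
      fix y assume y: "y \<in> A j"
      obtain x where x: "dist c x \<le> r" "x \<in> place F (g j)" using near[OF jJ] by blast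
      have "dist (snd (g j)) x \<le> r" using x(2) place_cball[of r d "g j"] r unfolding F_def by auto
      moreover have "dist (snd (g j)) y < \<rho>" using y unfolding A_def by simp
      ultimately have "dist c y \<le> r + r + \<rho>"
        using x(1) dist_triangle[of c y x] dist_triangle[of x y "snd (g j)"] by (simp add: dist_commute)
      then show "y \<in> cball c (27/10 * r)" unfolding \<rho>_def by simp
    qed
    have "real (card J) * (pi * \<rho>^2) \<le> measure lborel (cball c (27/10 * r))"
    proof (rule packing[OF Jfin, of A])
      show "disjoint_family_on A J" unfolding disjoint_family_on_def using disj Aint by blast
      show "\<And>j. j \<in> J \<Longrightarrow> pi * \<rho>^2 \<le> measure lborel (A j)"
        unfolding A_def using r by (simp add: content_ball_complex \<rho>_def)
    qed (use sub in \<open>auto simp: A_def\<close>)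
    also have "\<dots> = pi * (27/10 * r)^2"
      using r by (intro content_cball_complex) auto
    finally have "real (card J) * (pi * (49/100) * r^2) \<le> pi * (729/100) * r^2"
      unfolding \<rho>_def by (simp add: power2_eq_square algebra_simps)
    then have "real (card J) * 49 \<le> 729"
      using r pi_gt_zero by (simp add: mult_le_cancel_right algebra_simps)
    then have "card J \<le> 19" by simp
    then show ?thesis unfolding J_def F_def .
  qed
qed

theorem proposition2:
  fixes d n :: nat and r :: real and W :: "complex set"
    and s g :: "nat \<Rightarrow> pose"
  assumes "d \<ge> 3" and "r > 0"
    and "bounded W"
    and "\<forall>i<n. place (regular_polygon d r) (s i) \<subseteq> W"
    and "\<forall>j<n. place (regular_polygon d r) (g j) \<subseteq> W"
    and "feasible (regular_polygon d r) n s"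
    and "feasible (regular_polygon d r) n g"
  shows "(\<forall>i<n. start_degree (regular_polygon d r) n s g i \<le> 19) \<and>
         (\<forall>j<n. goal_degree (regular_polygon d r) n s g j \<le> 19)"
proof safe
  fix i assume i: "i < n"
  have "{j. (i, j) \<in> dep_edges (regular_polygon d r) n s g} =
        {j. j < n \<and> overlap (place (regular_polygon d r) (s i)) (place (regular_polygon d r) (g j))}"
    using i by (auto simp: dep_edges_def)
  then show "start_degree (regular_polygon d r) n s g i \<le> 19"
    unfolding start_degree_def using core[OF assms(1,2,7)] by simp
next
  fix j assume j: "j < n"
  have "{i. (i, j) \<in> dep_edges (regular_polygon d r) n s g} =
        {i. i < n \<and> overlap (place (regular_polygon d r) (g j)) (place (regular_polygon d r) (s i))}"
    using j by (auto simp: dep_edges_def overlap_def)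
  then show "goal_degree (regular_polygon d r) n s g j \<le> 19"
    unfolding goal_degree_def using core[OF assms(1,2,6)] by simp
qed

end
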